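(* Let $n\geq 4$ be an integer and let $x_{1},\dots,x_{n}\in \mathbb{R}$ satisfy $\sum_{i=1}^{n}x_{i}=0$ and $\sum_{i=1}^{n}x_{i}^{2}=1$. Set $x_{0}=x_{n}$. Then $$\sum_{i=1}^{n}x_{i}x_{i-1}< \frac{3n^{2}-4\pi^{2}}{3n^{2}+2\pi^{2}}.$$ *)

theory Defs
  imports Complex_Main
begin

end

theory Submission imports Defs begin
lemma cos_ub: fixes x::real assumes "\<bar>x\<bar> \<le> pi/2" shows "cos x \<le> 1 - x^2/2 + x^4/24"
proof -
  obtain t where t: "\<bar>t\<bar> \<le> \<bar>x\<bar>" and e: "cos x = (\<Sum>m<6. cos_coeff m * x ^ m) + (cos(t + 1/2 * real 6 * pi) / fact 6) * x ^ 6"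
    using Maclaurin_cos_expansion by blast
  have "cos(t + 1/2 * real 6 * pi) = - cos t"
    by (simp add: cos_add)
  moreover have "cos t \<ge> 0" using t assms by (intro cos_ge_zero) auto
  moreover have "(\<Sum>m<6. cos_coeff m * x ^ m) = 1 - x^2/2 + x^4/24"
    by (simp add: numeral_eq_Suc cos_coeff_Suc sin_coeff_Suc field_simps)
  ultimately show ?thesis using e by (simp add: zero_le_even_power)
qed
lemma cos_sum: fixes n::nat and d::int assumes "n > 0"
  shows "(\<Sum>k<n. cos (2*pi*real k*of_int d/n)) = (if int n dvd d then real n else 0)"
proof -
  let ?z = "cis (2*pi*of_int d/n)"
  have "(\<Sum>k<n. cos (2*pi*real k*of_int d/n)) = Re (\<Sum>k<n. ?z ^ k)"
    by (simp add: DeMoivre Re_sum mult.assoc mult.left_commute)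
  also have "\<dots> = (if int n dvd d then real n else 0)"
  proof (cases "int n dvd d")
    case True
    then obtain m where m: "d = int n * m" by blast
    have "2*pi*of_int d/n = 2*pi*of_int m" using assms unfolding m by simp
    then have "?z = cis (2*pi*of_int m)" by (rule arg_cong[where f=cis])
    also have "\<dots> = 1" by (rule cis_multiple_2pi) simp
    finally have "?z = 1" .
    then show ?thesis using True by simp
  next
    case False
    have zn: "?z ^ n = 1" using assms by (simp add: DeMoivre)
    have "?z \<noteq> 1"
    proof
      assume "?z = 1"
      then have "cos (2*pi*of_int d/n) = 1" by (metis cis.sel(1) one_complex.sel(1))
      then obtain m::int where "2*pi*of_int d/n = of_int m * 2 * pi" unfolding cos_one_2pi_int by blast
      then have "of_int d = real n * of_int m" using assms by (simp add: field_simps)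
      then have "d = int n * m" by (metis of_int_eq_iff of_int_mult of_int_of_nat_eq)
      then show False using False by simp
    qed
    then have "(\<Sum>k<n. ?z ^ k) = 0" using zn by (simp add: geometric_sum)
    then show ?thesis using False by simp
  qed
  finally show ?thesis .
qed
lemma dvd_range: fixes n::nat and d::int assumes "int n dvd d" "- int n \<le> d" "d < int n"
  shows "d = 0 \<or> d = - int n"
proof -
  obtain q where q: "d = int n * q" using assms(1) by blast
  have "n > 0" using assms by linarith
  have "q < 1"
  proof (rule ccontr)
    assume "\<not> q < 1" then have "int n * 1 \<le> int n * q" by (intro mult_left_mono) auto
    then show False using assms q by linarith
  qed
  moreover have "q \<ge> -1"
  proof (rule ccontr)
    assume "\<not> q \<ge> -1" then have "int n * q \<le> int n * (-2)" by (intro mult_left_mono) auto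
    then show False using assms q \<open>n > 0\<close> by simp
  qed
  ultimately have "q = 0 \<or> q = -1" by linarith
  then show ?thesis using q by auto
qed

lemma cos_le_first: fixes n k :: nat assumes "1 \<le> k" "k < n"
  shows "cos (2*pi*real k/n) \<le> cos (2*pi/n)"
proof (cases "2*k \<le> n")
  case True
  have "2*pi*real k/n \<le> pi" using True assms by (simp add: field_simps)
  moreover have "2*pi/n \<le> 2*pi*real k/n" using assms by (simp add: field_simps)
  ultimately show ?thesis using assms by (subst cos_mono_le_eq) auto
next
  case False
  have "pi * (real k + 1) \<le> pi * real n" using assms by (intro mult_left_mono) auto
  then have h: "2*pi + 2*pi*real k \<le> 2*pi*real n" by (simp add: algebra_simps)
  have e: "2*pi*real k/n = 2*pi - 2*pi*real (n-k)/n" using assms by (simp add: field_simps of_nat_diff)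
  have "2*pi*real (n-k)/n \<le> pi" using False assms by (simp add: field_simps of_nat_diff)
  moreover have "2*pi/n \<le> 2*pi*real (n-k)/n" using assms h by (simp add: field_simps of_nat_diff)
  ultimately have "cos (2*pi*real (n-k)/n) \<le> cos (2*pi/n)" using assms by (subst cos_mono_le_eq) auto
  then show ?thesis by (simp only: e cos_2pi_minus)
qed

lemma final_ineq: fixes n::nat assumes "n \<ge> 4"
  shows "1 - (2*pi/n)^2/2 + (2*pi/n)^4/24 < (3 * real n ^ 2 - 4 * pi ^ 2) / (3 * real n ^ 2 + 2 * pi ^ 2)"
proof -
  define t where "t = 2*pi/n"
  have t0: "t > 0" using assms by (simp add: t_def)
  have "t \<le> pi/2" using assms by (simp add: t_def field_simps)
  then have "t^2 \<le> (pi/2)^2" using t0 by (intro power_mono) auto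
  also have "\<dots> < 6" proof -
    have "pi*pi < 4*4" using pi_less_4 by (intro mult_strict_mono) auto
    then show ?thesis by (simp add: power2_eq_square)
  qed
  finally have t6: "t^2 < 6" .
  have r: "(3 * real n ^ 2 - 4 * pi ^ 2) / (3 * real n ^ 2 + 2 * pi ^ 2) = (6 - 2*t^2)/(6+t^2)"
  proof -
    have tn: "t^2 * (real n)^2 = 4*pi^2" using assms by (simp add: t_def field_simps)
    have "0 < 2*pi^2" "0 \<le> 3*real n^2" "0 \<le> t^2" by simp_all
    then have p1: "3 * real n ^ 2 + 2 * pi ^ 2 \<noteq> 0" and p2: "6 + t^2 \<noteq> 0" by linarith+
    have "(3 * real n ^ 2 - 4 * pi ^ 2) * (6 + t^2) = (6 - 2*t^2) * (3 * real n ^ 2 + 2 * pi ^ 2)"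
    proof -
      have "(3 * real n ^ 2 - 4 * pi ^ 2) * (6 + t^2) = 18 * real n^2 + 3*(t^2 * (real n)^2) - 24*pi^2 - 4*pi^2*t^2" by (simp add: algebra_simps)
      also have "(6 - 2*t^2) * (3 * real n ^ 2 + 2 * pi ^ 2) = 18 * real n^2 + 12*pi^2 - 6*(t^2 * (real n)^2) - 4*pi^2*t^2" by (simp add: algebra_simps)
      ultimately show ?thesis unfolding tn by simp
    qed
    then show ?thesis using p1 p2 by (simp add: frac_eq_eq)
  qed
  have "(6+t^2) * (1 - t^2/2 + t^4/24) = 6 - 2*t^2 - t^4/4 + t^6/24" by (simp add: algebra_simps power_add[symmetric] eval_nat_numeral)
  also have "\<dots> < 6 - 2*t^2"
  proof -
    have "t^6 = t^4 * t^2" by (simp add: power_add[symmetric])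
    moreover have "t^4 > 0" using t0 by simp
    ultimately have "t^6 < t^4 * 6" using t6 by (metis mult_strict_left_mono)
    then show ?thesis by simp
  qed
  finally have "1 - t^2/2 + t^4/24 < (6 - 2*t^2)/(6+t^2)"
    by (simp add: pos_less_divide_eq add_pos_nonneg mult.commute)
  then show ?thesis using r by (simp add: t_def)
qed
theorem proposition2p2:
  fixes n :: nat and x :: "nat \<Rightarrow> real"
  assumes "n \<ge> 4"
    and "(\<Sum>i=1..n. x i) = 0"
    and "(\<Sum>i=1..n. (x i)^2) = 1"
  shows "(\<Sum>i=1..n. x i * x (if i = 1 then n else i - 1))
           < (3 * real n ^ 2 - 4 * pi ^ 2) / (3 * real n ^ 2 + 2 * pi ^ 2)"
proof -
  have n0: "n > 0" using assms(1) by simp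
  define c where "c = (\<lambda>(k::nat) (d::int). cos (2*pi*real k*of_int d/n))"
  define p where "p = (\<lambda>i::nat. if i = 1 then n else i - 1)"
  define C where "C = (\<Sum>i=1..n. x i * x (p i))"
  define A where "A = (\<lambda>k. \<Sum>i=1..n. \<Sum>j=1..n. x i * x j * c k (int i - int j))"
  have csum: "(\<Sum>k<n. c k d) = (if int n dvd d then real n else 0)" for d
    unfolding c_def using cos_sum[OF n0] by simp
  have pts: "c k d * c k 1 = (c k (d+1) + c k (d-1))/2" for k d
  proof -
    define a where "a = 2*pi*real k*of_int d/n"
    define b where "b = 2*pi*real k/n"
    have "2*pi*real k*of_int (d+1)/n = a + b" "2*pi*real k*of_int (d-1)/n = a - b"
      by (simp_all add: a_def b_def algebra_simps add_divide_distrib diff_divide_distrib)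
    then show ?thesis unfolding c_def by (simp add: a_def[symmetric] b_def[symmetric] cos_add cos_diff)
  qed
  have Apos: "A k \<ge> 0" for k
  proof -
    define a where "a = (\<lambda>i::nat. 2*pi*real k*real i/n)"
    have "c k (int i - int j) = cos (a i) * cos (a j) + sin (a i) * sin (a j)" for i j
    proof -
      have "2*pi*real k*of_int (int i - int j)/n = a i - a j"
        by (simp add: a_def algebra_simps diff_divide_distrib)
      then show ?thesis unfolding c_def by (simp add: cos_diff)
    qed
    then have "A k = (\<Sum>i=1..n. x i * cos (a i)) * (\<Sum>j=1..n. x j * cos (a j))
       + (\<Sum>i=1..n. x i * sin (a i)) * (\<Sum>j=1..n. x j * sin (a j))"
      unfolding A_def by (simp add: sum_product sum.distrib[symmetric] algebra_simps)
    then show ?thesis by simp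
  qed
  have A0: "A 0 = 0"
  proof -
    have "A 0 = (\<Sum>i=1..n. x i) * (\<Sum>j=1..n. x j)"
      unfolding A_def c_def by (simp add: sum_product)
    then show ?thesis using assms(2) by simp
  qed
  have Asum: "(\<Sum>k<n. A k) = real n"
  proof -
    have "(\<Sum>k<n. A k) = (\<Sum>i=1..n. \<Sum>j=1..n. x i * x j * (\<Sum>k<n. c k (int i - int j)))"
      unfolding A_def
      by (simp add: sum_distrib_left sum.swap[where A="{..<n}"])
    also have "\<dots> = (\<Sum>i=1..n. \<Sum>j=1..n. if j = i then real n * (x i)^2 else 0)"
    proof (intro sum.cong refl)
      fix i j assume i: "i \<in> {1..n}" and j: "j \<in> {1..n}"
      have "int n dvd (int i - int j) \<longleftrightarrow> j = i"
      proof
        assume "int n dvd (int i - int j)"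
        with dvd_range[of n "int i - int j"] i j show "j = i" by auto
      qed simp
      then show "x i * x j * (\<Sum>k<n. c k (int i - int j)) = (if j = i then real n * (x i)^2 else 0)"
        by (simp add: csum power2_eq_square)
    qed
    also have "\<dots> = real n * (\<Sum>i=1..n. (x i)^2)"
      by (simp add: sum_distrib_left)
    finally show ?thesis using assms(3) by simp
  qed
  have Acos: "(\<Sum>k<n. A k * c k 1) = real n * C"
  proof -
    have "(\<Sum>k<n. A k * c k 1) = (\<Sum>i=1..n. \<Sum>j=1..n. \<Sum>k<n. x i * x j * (c k (int i - int j) * c k 1))"
      unfolding A_def
      by (simp add: sum_distrib_left sum_distrib_right sum.swap[where A="{..<n}"] mult.assoc)
    also have "\<dots> = (\<Sum>i=1..n. \<Sum>j=1..n. x i * x j * ((\<Sum>k<n. c k ((int i - int j) + 1)) + (\<Sum>k<n. c k ((int i - int j) - 1)))/2)"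
    proof (intro sum.cong refl)
      fix i j
      show "(\<Sum>k<n. x i * x j * (c k (int i - int j) * c k 1)) = x i * x j * ((\<Sum>k<n. c k ((int i - int j) + 1)) + (\<Sum>k<n. c k ((int i - int j) - 1)))/2"
        unfolding pts sum.distrib[symmetric] sum_distrib_left sum_divide_distrib by (simp add: algebra_simps)
    qed
    also have "\<dots> = (\<Sum>i=1..n. \<Sum>j=1..n. real n / 2 * (if j = p i then x i * x j else 0)
        + real n / 2 * (if i = p j then x i * x j else 0))"
    proof (intro sum.cong refl)
      fix i j assume i: "i \<in> {1..n}" and j: "j \<in> {1..n}"
      have e1: "int n dvd (int i - int j - 1) \<longleftrightarrow> j = p i"
      proof
        assume "int n dvd (int i - int j - 1)"
        with dvd_range[of n "int i - int j - 1"] i j show "j = p i" by (auto simp: p_def)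
      next
        assume "j = p i" then show "int n dvd (int i - int j - 1)" using i by (auto simp: p_def)
      qed
      have e2: "int n dvd (int i - int j + 1) \<longleftrightarrow> i = p j"
      proof
        assume "int n dvd (int i - int j + 1)"
        then have "int n dvd (int j - int i - 1)" by (metis dvd_minus_iff minus_diff_eq diff_diff_eq2 add.commute diff_add_eq)
        with dvd_range[of n "int j - int i - 1"] i j show "i = p j" by (auto simp: p_def)
      next
        assume "i = p j" then show "int n dvd (int i - int j + 1)" using j by (auto simp: p_def)
      qed
      show "x i * x j * ((\<Sum>k<n. c k (int i - int j + 1)) + (\<Sum>k<n. c k (int i - int j - 1))) / 2
         = real n / 2 * (if j = p i then x i * x j else 0) + real n / 2 * (if i = p j then x i * x j else 0)"
        by (simp add: csum e1 e2)
    qed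
    also have "\<dots> = real n / 2 * C + real n / 2 * C"
    proof -
      have pI: "p i \<in> {1..n}" if "i \<in> {1..n}" for i using that n0 by (auto simp: p_def)
      have s1: "(\<Sum>i=1..n. \<Sum>j=1..n. real n / 2 * (if j = p i then x i * x j else 0)) = real n / 2 * C"
        unfolding C_def sum_distrib_left using pI
        by (intro sum.cong refl) (simp add: if_distrib sum.delta' cong: if_cong)
      have "(\<Sum>i=1..n. \<Sum>j=1..n. real n / 2 * (if i = p j then x i * x j else 0))
          = (\<Sum>j=1..n. \<Sum>i=1..n. real n / 2 * (if i = p j then x i * x j else 0))"
        by (rule sum.swap)
      also have "\<dots> = real n / 2 * C"
        unfolding C_def sum_distrib_left using pI
        by (intro sum.cong refl) (simp add: if_distrib sum.delta' mult.commute cong: if_cong)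
      finally have s2: "(\<Sum>i=1..n. \<Sum>j=1..n. real n / 2 * (if i = p j then x i * x j else 0)) = real n / 2 * C" .
      show ?thesis unfolding sum.distrib s1 s2 ..
    qed
    finally show ?thesis by simp
  qed
  have "real n * C = (\<Sum>k\<in>{1..<n}. A k * c k 1)"
  proof -
    have "{..<n} = insert 0 {1..<n}" using n0 by auto
    then show ?thesis using Acos A0 by simp
  qed
  also have "\<dots> \<le> (\<Sum>k\<in>{1..<n}. A k * cos (2*pi/n))"
  proof (intro sum_mono mult_left_mono)
    fix k assume "k \<in> {1..<n}"
    then show "c k 1 \<le> cos (2*pi/n)" unfolding c_def using cos_le_first[of k n] by simp
  qed (rule Apos)
  also have "\<dots> = (\<Sum>k<n. A k) * cos (2*pi/n)"
  proof -
    have "{..<n} = insert 0 {1..<n}" using n0 by auto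
    then show ?thesis using A0 by (simp add: sum_distrib_right)
  qed
  finally have "C \<le> cos (2*pi/n)" using Asum n0 by simp
  also have "\<dots> \<le> 1 - (2*pi/n)^2/2 + (2*pi/n)^4/24"
  proof (rule cos_ub)
    have "2*pi/n \<le> pi/2" using assms(1) by (simp add: field_simps)
    then show "\<bar>2*pi/n\<bar> \<le> pi/2" by simp
  qed
  also have "\<dots> < (3 * real n ^ 2 - 4 * pi ^ 2) / (3 * real n ^ 2 + 2 * pi ^ 2)"
    by (rule final_ineq[OF assms(1)])
  finally show ?thesis unfolding C_def p_def .
qed

end
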